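(* Assume that $Y=\mu^\star_y(Z)+\eta$ and $X=\mu^\star_x(Z)+\varepsilon$, where $\eta$ and $\varepsilon$ are mean-zero random variables, independent of $Z$ and of each other, and $\varepsilon\sim\mathcal N(0,1)$; assume $\mathbf y\neq 0$ almost surely. Let $\mu_{x,\mathrm{mx}}$ be a fixed function, and let the model-X CRT draw, conditional on $\mathbf D$, $\mathbf x^{(1)},\dots,\mathbf x^{(M)}$ i.i.d. with independent coordinates $X^{(m)}_i\sim\mathcal N(\mu_{x,\mathrm{mx}}(Z_i),1)$, and set $$p_{\mathrm{mx}}(\mathbf D)=\frac{1}{M+1}\Big(1+\sum_{m=1}^M\mathbf 1\{|\mathbf x^{(m)\top}\mathbf y|\ge|\mathbf x^\top\mathbf y|\}\Big).$$ Then for every integer $M\ge1$ and every $\alpha\in(0,1)$, $$\mathbb P(p_{\mathrm{mx}}(\mathbf D)\le\alpha)\le\alpha+\frac{2}{\sqrt{2\pi}}\sqrt{n\,\mathbb E\big[(\mu^\star_x(Z)-\mu_{x,\mathrm{mx}}(Z))^2\big]}.$$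
   Context: Let $(Y_i,X_i,Z_i)$, $i=1,\dots,n$, be i.i.d. copies of $(Y,X,Z)$ with $Y,X\in\mathbb R$, $Z\in\mathbb R^p$; $\mathbf y=(Y_1,\dots,Y_n)^\top$, $\mathbf x=(X_1,\dots,X_n)^\top$, $\mathbf Z$ the matrix with rows $Z_i^\top$, $\mathbf D=(\mathbf y,\mathbf x,\mathbf Z)$. $Z$ in the bound denotes a generic copy of the covariate vector. *)

theory Defs
  imports "HOL-Probability.Probability"
begin

text \<open>Indices of the primitive random variables: Z_i, eta_i, eps_i (i < n) and the
  standard-normal innovations xi_{m,i} (1 <= m <= M, i < n) used by the model-X CRT.\<close>
datatype crt_idx = IZ nat | IEta nat | IEps nat | IXi nat nat

definition crt_index_set :: "nat \<Rightarrow> nat \<Rightarrow> crt_idx set" where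
  "crt_index_set n M =
     {IZ i | i. i < n} \<union> {IEta i | i. i < n} \<union> {IEps i | i. i < n}
     \<union> {IXi m i | m i. 1 \<le> m \<and> m \<le> M \<and> i < n}"

text \<open>Mutual independence of the whole (mixed-type) family, written out as the
  independence of the generated sigma-algebras (this is what indep_vars unfolds to).\<close>
definition crt_indep ::
  "'w measure \<Rightarrow> nat \<Rightarrow> nat \<Rightarrow> (nat \<Rightarrow> 'w \<Rightarrow> 'z::topological_space) \<Rightarrow> (nat \<Rightarrow> 'w \<Rightarrow> real)
    \<Rightarrow> (nat \<Rightarrow> 'w \<Rightarrow> real) \<Rightarrow> (nat \<Rightarrow> nat \<Rightarrow> 'w \<Rightarrow> real) \<Rightarrow> bool" where
  "crt_indep \<Omega> n M Z eta eps xi =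
     prob_space.indep_sets \<Omega>
       (\<lambda>j. case j of
          IZ i \<Rightarrow> {Z i -` A \<inter> space \<Omega> | A. A \<in> sets borel}
        | IEta i \<Rightarrow> {eta i -` A \<inter> space \<Omega> | A. A \<in> sets borel}
        | IEps i \<Rightarrow> {eps i -` A \<inter> space \<Omega> | A. A \<in> sets borel}
        | IXi m i \<Rightarrow> {xi m i -` A \<inter> space \<Omega> | A. A \<in> sets borel})
       (crt_index_set n M)"

text \<open>Model-X CRT p-value: y, x are the observed vectors, xt m the m-th resampled x.\<close>
definition p_mx :: "nat \<Rightarrow> nat \<Rightarrow> (nat \<Rightarrow> real) \<Rightarrow> (nat \<Rightarrow> real) \<Rightarrow> (nat \<Rightarrow> nat \<Rightarrow> real) \<Rightarrow> real" where
  "p_mx n M y x xt =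
     (1 + real (card {m \<in> {1..M}. \<bar>\<Sum>i<n. xt m i * y i\<bar> \<ge> \<bar>\<Sum>i<n. x i * y i\<bar>})) / (real M + 1)"

end

theory Submission
  imports Defs
begin

lemma nd_shift: "normal_density d s (d + x) = normal_density 0 s x"
  "normal_density d s (x + d) = normal_density 0 s x"
  by (simp_all add: normal_density_def)

lemma nd_le0: "normal_density 0 s x \<le> normal_density 0 s 0"
proof -
  have "exp (- (x\<^sup>2 / (2 * s\<^sup>2))) \<le> 1" by simp
  then show ?thesis by (simp add: normal_density_def divide_right_mono)
qed

lemma nd_cmp:
  assumes "(t - a)\<^sup>2 \<le> (t - b)\<^sup>2"
  shows "normal_density b s t \<le> normal_density a s t"
proof -
  have "- (t - b)\<^sup>2 / (2 * s\<^sup>2) \<le> - (t - a)\<^sup>2 / (2 * s\<^sup>2)"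
    using assms by (intro divide_right_mono) auto
  then show ?thesis unfolding normal_density_def
    by (intro mult_left_mono) auto
qed

lemma int_shift:
  fixes f :: "real \<Rightarrow> real"
  shows "(\<integral>t. f t \<partial>lborel) = (\<integral>x. f (d + x) \<partial>lborel)"
  using lborel_integral_real_affine[of 1 f d] by simp

lemma nd_int_ind:
  assumes "A \<in> sets borel" "0 < s"
  shows "integrable lborel (\<lambda>t. normal_density d s t * indicator A t)"
  using assms by (intro integrable_real_mult_indicator) auto

lemma interval_bound:
  assumes "0 \<le> h" "0 < s"
  shows "(\<integral>x. normal_density 0 s x * indicator {-h<..h} x \<partial>lborel) \<le> 2 * h * normal_density 0 s 0"
proof -
  have ii: "integrable lborel (\<lambda>x. normal_density 0 s 0 * indicator {-h<..h} x)"
    by (intro integrable_mult_right integrable_real_indicator) (use assms in \<open>auto simp: emeasure_lborel_Ioc\<close>)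
  have "(\<integral>x. normal_density 0 s x * indicator {-h<..h} x \<partial>lborel)
      \<le> (\<integral>x. normal_density 0 s 0 * indicator {-h<..h} x \<partial>lborel)"
    using ii assms by (intro integral_mono nd_int_ind) (auto simp: nd_le0 split: split_indicator)
  also have "\<dots> = normal_density 0 s 0 * measure lborel {-h<..h}"
    by simp
  also have "\<dots> = 2 * h * normal_density 0 s 0"
    using assms by simp
  finally show ?thesis .
qed

lemma J_diff:
  assumes "a \<le> b" and S: "S \<in> sets borel" and s0: "0 < s"
  shows "(\<integral>t. normal_density a s t * indicator S t \<partial>lborel)
       \<le> (\<integral>t. normal_density b s t * indicator S t \<partial>lborel) + (b - a) * normal_density 0 s 0"
    and "(\<integral>t. normal_density b s t * indicator S t \<partial>lborel)
       \<le> (\<integral>t. normal_density a s t * indicator S t \<partial>lborel) + (b - a) * normal_density 0 s 0"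
proof -
  define m where "m = (a + b) / 2"
  define h where "h = (b - a) / 2"
  have h0: "0 \<le> h" using assms unfolding h_def by simp
  have cmp1: "t \<le> m \<Longrightarrow> normal_density b s t \<le> normal_density a s t" for t
  proof (rule nd_cmp)
    assume "t \<le> m"
    then have "0 \<le> (b - a) * (a + b - 2 * t)" using assms by (intro mult_nonneg_nonneg) (auto simp: m_def)
    then show "(t - a)\<^sup>2 \<le> (t - b)\<^sup>2" by (simp add: power2_eq_square algebra_simps)
  qed
  have cmp2: "m < t \<Longrightarrow> normal_density a s t \<le> normal_density b s t" for t
  proof (rule nd_cmp)
    assume "m < t"
    then have "0 \<le> (b - a) * (2 * t - a - b)" using assms by (intro mult_nonneg_nonneg) (auto simp: m_def)
    then show "(t - b)\<^sup>2 \<le> (t - a)\<^sup>2" by (simp add: power2_eq_square algebra_simps)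
  qed
  have I1: "(\<integral>t. normal_density a s t * indicator {..m} t \<partial>lborel)
      = (\<integral>x. normal_density 0 s x * indicator {..h} x \<partial>lborel)"
    by (subst int_shift[where d=a]) (simp add: nd_shift m_def h_def indicator_def field_simps)
  have I2: "(\<integral>t. normal_density b s t * indicator {..m} t \<partial>lborel)
      = (\<integral>x. normal_density 0 s x * indicator {..-h} x \<partial>lborel)"
    by (subst int_shift[where d=b]) (simp add: nd_shift m_def h_def indicator_def field_simps)
  have I3: "(\<integral>t. normal_density b s t * indicator {m<..} t \<partial>lborel)
      = (\<integral>x. normal_density 0 s x * indicator {-h<..} x \<partial>lborel)"
    by (subst int_shift[where d=b]) (simp add: nd_shift m_def h_def indicator_def field_simps)
  have I4: "(\<integral>t. normal_density a s t * indicator {m<..} t \<partial>lborel)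
      = (\<integral>x. normal_density 0 s x * indicator {h<..} x \<partial>lborel)"
    by (subst int_shift[where d=a]) (simp add: nd_shift m_def h_def indicator_def field_simps)
  have sp1: "(\<integral>x. normal_density 0 s x * indicator {..h} x \<partial>lborel)
     = (\<integral>x. normal_density 0 s x * indicator {..-h} x \<partial>lborel)
       + (\<integral>x. normal_density 0 s x * indicator {-h<..h} x \<partial>lborel)"
    using h0 by (subst Bochner_Integration.integral_add[symmetric])
       (auto intro!: nd_int_ind s0 Bochner_Integration.integral_cong split: split_indicator)
  have sp2: "(\<integral>x. normal_density 0 s x * indicator {-h<..} x \<partial>lborel)
     = (\<integral>x. normal_density 0 s x * indicator {h<..} x \<partial>lborel)
       + (\<integral>x. normal_density 0 s x * indicator {-h<..h} x \<partial>lborel)"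
    using h0 by (subst Bochner_Integration.integral_add[symmetric])
       (auto intro!: nd_int_ind s0 Bochner_Integration.integral_cong split: split_indicator)
  have IB: "(\<integral>x. normal_density 0 s x * indicator {-h<..h} x \<partial>lborel) \<le> (b - a) * normal_density 0 s 0"
  proof -
    have "2 * h = b - a" by (simp add: h_def)
    then show ?thesis using interval_bound[OF h0 s0] by simp
  qed
  have "(\<integral>t. normal_density a s t * indicator S t \<partial>lborel) - (\<integral>t. normal_density b s t * indicator S t \<partial>lborel)
      = (\<integral>t. (normal_density a s t - normal_density b s t) * indicator S t \<partial>lborel)"
    using S by (subst Bochner_Integration.integral_diff[symmetric]) (auto intro!: nd_int_ind s0 simp: left_diff_distrib)
  also have "\<dots> \<le> (\<integral>t. (normal_density a s t - normal_density b s t) * indicator {..m} t \<partial>lborel)"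
    using S cmp1 cmp2
    by (intro integral_mono) (auto intro!: nd_int_ind s0 integrable_real_mult_indicator split: split_indicator
        simp: not_le)
  also have "\<dots> = (\<integral>t. normal_density a s t * indicator {..m} t \<partial>lborel) - (\<integral>t. normal_density b s t * indicator {..m} t \<partial>lborel)"
    by (subst Bochner_Integration.integral_diff[symmetric]) (auto intro!: nd_int_ind s0 simp: left_diff_distrib)
  finally show "(\<integral>t. normal_density a s t * indicator S t \<partial>lborel)
       \<le> (\<integral>t. normal_density b s t * indicator S t \<partial>lborel) + (b - a) * normal_density 0 s 0"
    using I1 I2 sp1 IB by linarith
  have "(\<integral>t. normal_density b s t * indicator S t \<partial>lborel) - (\<integral>t. normal_density a s t * indicator S t \<partial>lborel)
      = (\<integral>t. (normal_density b s t - normal_density a s t) * indicator S t \<partial>lborel)"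
    using S by (subst Bochner_Integration.integral_diff[symmetric]) (auto intro!: nd_int_ind s0 simp: left_diff_distrib)
  also have "\<dots> \<le> (\<integral>t. (normal_density b s t - normal_density a s t) * indicator {m<..} t \<partial>lborel)"
    using S cmp1 cmp2
    by (intro integral_mono) (auto intro!: nd_int_ind s0 integrable_real_mult_indicator split: split_indicator
        simp: not_le)
  also have "\<dots> = (\<integral>t. normal_density b s t * indicator {m<..} t \<partial>lborel) - (\<integral>t. normal_density a s t * indicator {m<..} t \<partial>lborel)"
    by (subst Bochner_Integration.integral_diff[symmetric]) (auto intro!: nd_int_ind s0 simp: left_diff_distrib)
  finally show "(\<integral>t. normal_density b s t * indicator S t \<partial>lborel)
       \<le> (\<integral>t. normal_density a s t * indicator S t \<partial>lborel) + (b - a) * normal_density 0 s 0"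
    using I3 I4 sp2 IB by linarith
qed

lemma card_eq_sum_if:
  "finite I \<Longrightarrow> real (card {k\<in>I. P k}) = (\<Sum>k\<in>I. if P k then 1 else 0)"
  by (simp add: sum.inter_filter[symmetric])

lemma count_bound:
  fixes h :: "nat \<Rightarrow> real" and I :: "nat set"
  assumes "finite I" "0 \<le> K"
  shows "real (card {j\<in>I. real (card {k\<in>I. \<bar>h j\<bar> \<le> \<bar>h k\<bar>}) \<le> K}) \<le> K"
proof (cases "{j\<in>I. real (card {k\<in>I. \<bar>h j\<bar> \<le> \<bar>h k\<bar>}) \<le> K} = {}")
  case True show ?thesis unfolding True using assms by simp
next
  case False
  define S where "S = {j\<in>I. real (card {k\<in>I. \<bar>h j\<bar> \<le> \<bar>h k\<bar>}) \<le> K}"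
  have fS: "finite S" using assms by (simp add: S_def)
  have ne: "S \<noteq> {}" using False by (simp add: S_def)
  obtain j0 where j0: "j0 \<in> S" "\<bar>h j0\<bar> = Min ((\<lambda>j. \<bar>h j\<bar>) ` S)"
  proof -
    have "Min ((\<lambda>j. \<bar>h j\<bar>) ` S) \<in> (\<lambda>j. \<bar>h j\<bar>) ` S"
      using fS ne by (intro Min_in) auto
    then show ?thesis using that by force
  qed
  have "S \<subseteq> {k\<in>I. \<bar>h j0\<bar> \<le> \<bar>h k\<bar>}"
    using j0 fS by (auto simp: S_def)
  then have "real (card S) \<le> real (card {k\<in>I. \<bar>h j0\<bar> \<le> \<bar>h k\<bar>})"
    using assms by (simp add: card_mono)
  also have "\<dots> \<le> K" using j0(1) unfolding S_def by blast
  finally show ?thesis unfolding S_def .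
qed

lemma card_set_meas:
  fixes N :: "real measure" and K :: real and M :: nat
  assumes N: "sets N = sets borel" and j: "j \<le> M"
  shows "{h\<in>space (PiM {0..M} (\<lambda>_. N)). real (card {k\<in>{0..M}. \<bar>h j\<bar> \<le> \<bar>h k\<bar>}) \<le> K} \<in> sets (PiM {0..M} (\<lambda>_. N))"
proof -
  define P where "P = PiM {0..M} (\<lambda>_. N)"
  define I where "I = {0..M}"
  have Nm: "(\<lambda>x. x) \<in> measurable N borel" by (subst measurable_cong_sets[OF N refl]) simp
  have "{h\<in>space P. real (card {k\<in>I. \<bar>h j\<bar> \<le> \<bar>h k\<bar>}) \<le> K} = {h\<in>space P. (\<Sum>k\<in>I. if \<bar>h j\<bar> \<le> \<bar>h k\<bar> then 1 else 0::real) \<le> K}"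
    by (subst card_eq_sum_if) (auto simp: I_def)
  also have "\<dots> \<in> sets P"
  proof -
    have c: "(\<lambda>h. h i) \<in> borel_measurable P" if "i \<in> I" for i
      using that unfolding P_def
      by (intro measurable_compose[OF _ Nm] measurable_component_singleton) (auto simp: I_def)
    have "(\<lambda>h. \<Sum>k\<in>I. if \<bar>h j\<bar> \<le> \<bar>h k\<bar> then 1 else 0::real) \<in> borel_measurable P"
      using c j by (intro borel_measurable_sum measurable_If borel_measurable_le borel_measurable_abs) (auto simp: I_def)
    from measurable_sets[OF this, of "{..K}"] show ?thesis
      by (simp add: vimage_def Int_def conj_commute)
  qed
  finally show ?thesis unfolding P_def I_def .
qed

lemma exch:
  fixes N :: "real measure" and K :: real and M :: nat
  assumes N: "prob_space N" "sets N = sets borel" and K: "0 \<le> K"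
  defines "P \<equiv> PiM {0..M} (\<lambda>_. N)"
  shows "measure P {h\<in>space P. real (card {k\<in>{0..M}. \<bar>h 0\<bar> \<le> \<bar>h k\<bar>}) \<le> K} * (real M + 1) \<le> K"
proof -
  define I where "I = {0..M}"
  define A where "A j = {h\<in>space P. real (card {k\<in>I. \<bar>h j\<bar> \<le> \<bar>h k\<bar>}) \<le> K}" for j
  interpret P: prob_space P unfolding P_def using N by (intro prob_space_PiM) auto
  have Nm: "(\<lambda>x. x) \<in> measurable N borel" by (subst measurable_cong_sets[OF N(2) refl]) simp
  have Am: "A j \<in> sets P" if "j \<in> I" for j
  proof -
    have "A j = {h\<in>space P. (\<Sum>k\<in>I. if \<bar>h j\<bar> \<le> \<bar>h k\<bar> then 1 else 0::real) \<le> K}"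
      unfolding A_def by (subst card_eq_sum_if) (auto simp: I_def)
    also have "\<dots> \<in> sets P"
    proof -
      have c: "(\<lambda>h. h i) \<in> borel_measurable P" if "i \<in> I" for i
        using that unfolding P_def
        by (intro measurable_compose[OF _ Nm] measurable_component_singleton) (auto simp: I_def)
      have "(\<lambda>h. \<Sum>k\<in>I. if \<bar>h j\<bar> \<le> \<bar>h k\<bar> then 1 else 0::real) \<in> borel_measurable P"
        using c \<open>j \<in> I\<close> by (intro borel_measurable_sum measurable_If borel_measurable_le borel_measurable_abs) auto
      from measurable_sets[OF this, of "{..K}"] show ?thesis
        by (simp add: vimage_def Int_def conj_commute)
    qed
    finally show ?thesis .
  qed
  have fI: "finite I" by (simp add: I_def)
  have sym: "measure P (A j) = measure P (A 0)" if j: "j \<in> I" for j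
  proof -
    define f where "f k = (if k = 0 then j else if k = j then 0 else k)" for k
    have fI1: "f \<in> I \<rightarrow> I" using j by (auto simp: f_def I_def)
    have inj: "inj_on f I" by (auto simp: f_def inj_on_def)
    have ff: "f (f k) = k" for k by (auto simp: f_def)
    define g where "g = (\<lambda>\<omega>::nat\<Rightarrow>real. \<lambda>n\<in>I. \<omega> (f n))"
    have D: "distr P P g = P"
      unfolding P_def g_def I_def using distr_PiM_reindex[of "{0..M}" "\<lambda>_. N" f "{0..M}"] fI1 inj N
      by (simp add: I_def)
    have gm: "g \<in> measurable P P"
      using fI1 unfolding P_def g_def I_def
      by (intro measurable_restrict measurable_component_singleton) (auto simp: Pi_iff)
    have "measure P (A 0) = measure (distr P P g) (A 0)" by (simp add: D)
    also have "\<dots> = measure P (g -` A 0 \<inter> space P)"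
      using gm Am[of 0] by (subst measure_distr) (auto simp: I_def)
    also have "g -` A 0 \<inter> space P = A j"
    proof -
      have "card {k\<in>I. \<bar>h (f 0)\<bar> \<le> \<bar>h (f k)\<bar>} = card {k\<in>I. \<bar>h j\<bar> \<le> \<bar>h k\<bar>}" for h :: "nat \<Rightarrow> real"
      proof -
        have "f ` {k\<in>I. \<bar>h (f 0)\<bar> \<le> \<bar>h (f k)\<bar>} = {k\<in>I. \<bar>h j\<bar> \<le> \<bar>h k\<bar>}"
        proof
          show "f ` {k\<in>I. \<bar>h (f 0)\<bar> \<le> \<bar>h (f k)\<bar>} \<subseteq> {k\<in>I. \<bar>h j\<bar> \<le> \<bar>h k\<bar>}"
            using fI1 j by (auto simp: f_def I_def)
          show "{k\<in>I. \<bar>h j\<bar> \<le> \<bar>h k\<bar>} \<subseteq> f ` {k\<in>I. \<bar>h (f 0)\<bar> \<le> \<bar>h (f k)\<bar>}"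
          proof
            fix k assume k: "k \<in> {k\<in>I. \<bar>h j\<bar> \<le> \<bar>h k\<bar>}"
            have "f k \<in> I" using k fI1 by auto
            moreover have "f 0 = j" by (simp add: f_def)
            ultimately show "k \<in> f ` {k\<in>I. \<bar>h (f 0)\<bar> \<le> \<bar>h (f k)\<bar>}"
              using k ff by (intro image_eqI[of _ _ "f k"]) auto
          qed
        qed
        moreover have "inj_on f {k\<in>I. \<bar>h (f 0)\<bar> \<le> \<bar>h (f k)\<bar>}"
          using inj by (rule inj_on_subset) auto
        then have "card (f ` {k\<in>I. \<bar>h (f 0)\<bar> \<le> \<bar>h (f k)\<bar>}) = card {k\<in>I. \<bar>h (f 0)\<bar> \<le> \<bar>h (f k)\<bar>}"
          by (rule card_image)
        ultimately show ?thesis by simp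
      qed
      moreover have "f 0 \<in> I" "\<And>k. k \<in> I \<Longrightarrow> f k \<in> I" using fI1 j by (auto simp: I_def f_def)
      ultimately show ?thesis
        using measurable_space[OF gm]
        by (auto simp: A_def g_def I_def cong: conj_cong)
    qed
    finally show ?thesis by simp
  qed
  have intA: "integrable P (indicator (A j) :: _ \<Rightarrow> real)" if "j \<in> I" for j
    using Am[OF that] by (intro integrable_real_indicator) (auto simp: less_top[symmetric])
  have "(\<Sum>j\<in>I. measure P (A j)) = (\<Sum>j\<in>I. \<integral>h. indicator (A j) h \<partial>P)"
    using Am by simp
  also have "\<dots> = (\<integral>h. (\<Sum>j\<in>I. indicator (A j) h) \<partial>P)"
    using intA by (subst Bochner_Integration.integral_sum) auto
  also have "\<dots> \<le> (\<integral>h. K \<partial>P)"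
  proof (intro integral_mono)
    show "integrable P (\<lambda>h. \<Sum>j\<in>I. indicator (A j) h :: real)"
      using intA by (intro Bochner_Integration.integrable_sum) auto
    show "integrable P (\<lambda>h. K)" by simp
    fix h assume h: "h \<in> space P"
    have "(\<Sum>j\<in>I. indicator (A j) h :: real) = (\<Sum>j\<in>I. if real (card {k\<in>I. \<bar>h j\<bar> \<le> \<bar>h k\<bar>}) \<le> K then 1 else 0)"
      using h by (intro sum.cong) (auto simp: A_def indicator_def)
    also have "\<dots> = real (card {j\<in>I. real (card {k\<in>I. \<bar>h j\<bar> \<le> \<bar>h k\<bar>}) \<le> K})"
      by (rule card_eq_sum_if[OF fI, symmetric])
    also have "\<dots> \<le> K" by (rule count_bound[OF fI K])
    finally show "(\<Sum>j\<in>I. indicator (A j) h) \<le> K" .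
  qed
  also have "\<dots> = K" by (simp add: P.prob_space)
  finally have "(\<Sum>j\<in>I. measure P (A j)) \<le> K" .
  moreover have "(\<Sum>j\<in>I. measure P (A j)) = measure P (A 0) * (real M + 1)"
  proof -
    have "(\<Sum>j\<in>I. measure P (A j)) = (\<Sum>j\<in>I. measure P (A 0))"
      by (rule sum.cong[OF refl sym])
    then show ?thesis by (simp add: I_def)
  qed
  ultimately show ?thesis by (simp add: A_def I_def)
qed

lemma (in prob_space) indep_blocks:
  assumes ind: "indep_vars (\<lambda>_. borel) X I" and K: "\<And>j. j \<in> L \<Longrightarrow> K j \<subseteq> I"
    and D: "disjoint_family_on K L"
    and F: "\<And>j. j \<in> L \<Longrightarrow> F j \<in> borel_measurable (PiM (K j) (\<lambda>_. borel))"
  shows "indep_vars (\<lambda>_. borel) (\<lambda>j \<omega>. F j (\<lambda>i\<in>K j. X i \<omega>)) L"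
  using indep_vars_compose2[OF indep_vars_restrict[OF ind K D] F] by simp

lemma L1D:
  assumes S: "S \<in> sets borel" and s: "0 < s"
  shows "emeasure (density lborel (\<lambda>x. ennreal (normal_density a s x))) S
    \<le> emeasure (density lborel (\<lambda>x. ennreal (normal_density b s x))) S + ennreal (\<bar>a - b\<bar> * normal_density 0 s 0)"
proof -
  have E: "emeasure (density lborel (\<lambda>x. ennreal (normal_density d s x))) S
      = ennreal (\<integral>t. normal_density d s t * indicator S t \<partial>lborel)" for d
  proof -
    have "emeasure (density lborel (\<lambda>x. ennreal (normal_density d s x))) S
       = (\<integral>\<^sup>+t. ennreal (normal_density d s t * indicator S t) \<partial>lborel)"
      using S by (subst emeasure_density) (auto intro!: nn_integral_cong simp: indicator_def)
    also have "\<dots> = ennreal (\<integral>t. normal_density d s t * indicator S t \<partial>lborel)"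
      using S s by (intro nn_integral_eq_integral nd_int_ind) auto
    finally show ?thesis .
  qed
  have p0: "0 \<le> normal_density 0 s 0" by simp
  have J: "(\<integral>t. normal_density a s t * indicator S t \<partial>lborel)
       \<le> (\<integral>t. normal_density b s t * indicator S t \<partial>lborel) + \<bar>a - b\<bar> * normal_density 0 s 0"
  proof (cases "a \<le> b")
    case True then show ?thesis using J_diff(1)[OF True S s] by simp
  next
    case False then show ?thesis using J_diff(2)[of b a S s] S s by simp
  qed
  have pos: "0 \<le> (\<integral>t. normal_density b s t * indicator S t \<partial>lborel)"
    by (intro integral_nonneg_AE) auto
  show ?thesis unfolding E using J pos p0
    by (simp add: ennreal_plus[symmetric] del: ennreal_plus)
qed

lemma sum_card_split:
  "real (card {k\<in>{0..M::nat}. P k}) = (if P 0 then 1 else 0) + real (card {m\<in>{1..M}. P m})"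
proof -
  have e: "{k\<in>{0..M}. P k} = (if P 0 then insert 0 {m\<in>{1..M}. P m} else {m\<in>{1..M}. P m})"
    by (auto simp: not_le Suc_le_eq) (metis neq0_conv)
  show ?thesis by (subst e) auto
qed

context prob_space
begin

lemma inner:
  fixes E :: "nat \<Rightarrow> nat \<Rightarrow> 'a \<Rightarrow> real" and y u w :: "nat \<Rightarrow> real" and \<alpha> :: real
  assumes ind: "indep_vars (\<lambda>_. borel) (\<lambda>p. E (fst p) (snd p)) ({0..R} \<times> {..<n})"
    and nrm: "\<And>m i. m \<le> R \<Longrightarrow> i < n \<Longrightarrow> distributed M lborel (E m i) (\<lambda>t. ennreal (std_normal_density t))"
    and y: "\<exists>i<n. y i \<noteq> 0" and \<alpha>: "0 < \<alpha>"
  shows "prob {\<omega>\<in>space M. p_mx n R y (\<lambda>i. u i + E 0 i \<omega>) (\<lambda>m i. w i + E m i \<omega>) \<le> \<alpha>}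
     \<le> \<alpha> + 2 / sqrt (2 * pi) * sqrt (\<Sum>i<n. (u i - w i)\<^sup>2)"
proof -
  define \<sigma> where "\<sigma> = sqrt (\<Sum>i<n. (y i)\<^sup>2)"
  obtain i0 where i0: "i0 < n" "y i0 \<noteq> 0" using y by auto
  have ssq: "0 < (\<Sum>i<n. (y i)\<^sup>2)"
    using i0 by (intro sum_pos2[of "{..<n}" i0]) auto
  have \<sigma>0: "0 < \<sigma>" unfolding \<sigma>_def using ssq by simp
  define G where "G m \<omega> = (\<Sum>i<n. y i * E m i \<omega>)" for m \<omega>
  define cu where "cu = (\<Sum>i<n. u i * y i)"
  define cw where "cw = (\<Sum>i<n. w i * y i)"
  define K where "K = \<alpha> * (real R + 1)"
  have K0: "0 \<le> K" using \<alpha> by (simp add: K_def)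
  have indG: "indep_vars (\<lambda>_. borel) G {0..R}"
  proof -
    have "indep_vars (\<lambda>_. borel) (\<lambda>j \<omega>. (\<lambda>f. \<Sum>i<n. y i * f (j, i)) (\<lambda>p\<in>{j} \<times> {..<n}. E (fst p) (snd p) \<omega>)) {0..R}"
    proof (rule indep_blocks[OF ind])
      show "disjoint_family_on (\<lambda>j. {j} \<times> {..<n}) {0..R}"
        by (auto simp: disjoint_family_on_def)
      fix j assume "j \<in> {0..R}"
      then show "{j} \<times> {..<n} \<subseteq> {0..R} \<times> {..<n}" by auto
      show "(\<lambda>f. \<Sum>i<n. y i * f (j, i)) \<in> borel_measurable (Pi\<^sub>M ({j} \<times> {..<n}) (\<lambda>_. borel))"
        by measurable
    qed
    then show ?thesis
      by (rule indep_vars_cong[THEN iffD1, rotated 3]) (auto simp: G_def fun_eq_iff)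
  qed
  have nG: "distributed M lborel (G m) (\<lambda>x. ennreal (normal_density 0 \<sigma> x))" if m: "m \<le> R" for m
  proof -
    define I' where "I' = {i. i < n \<and> y i \<noteq> 0}"
    have fI': "finite I'" "I' \<noteq> {}" using i0 by (auto simp: I'_def)
    have indI': "indep_vars (\<lambda>_. borel) (\<lambda>i \<omega>. y i * E m i \<omega>) I'"
    proof -
      have "indep_vars (\<lambda>_. borel) (\<lambda>i \<omega>. (\<lambda>f. y i * f (m, i)) (\<lambda>p\<in>{(m, i)}. E (fst p) (snd p) \<omega>)) I'"
      proof (rule indep_blocks[OF ind])
        show "disjoint_family_on (\<lambda>i. {(m, i)}) I'"
          by (auto simp: disjoint_family_on_def)
        fix i assume "i \<in> I'"
        then show "{(m, i)} \<subseteq> {0..R} \<times> {..<n}" using m by (auto simp: I'_def)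
        show "(\<lambda>f. y i * f (m, i)) \<in> borel_measurable (Pi\<^sub>M {(m, i)} (\<lambda>_. borel))"
          by measurable
      qed
      then show ?thesis
        by (rule indep_vars_cong[THEN iffD1, rotated 3]) (auto simp: fun_eq_iff)
    qed
    have nI: "distributed M lborel (\<lambda>\<omega>. y i * E m i \<omega>) (\<lambda>x. ennreal (normal_density 0 \<bar>y i\<bar> x))"
      if "i \<in> I'" for i
    proof -
      have "i < n" "y i \<noteq> 0" using that by (auto simp: I'_def)
      from normal_density_affine[OF nrm[OF m \<open>i < n\<close>] zero_less_one \<open>y i \<noteq> 0\<close>, of 0]
      show ?thesis by simp
    qed
    have "distributed M lborel (\<lambda>x. \<Sum>i\<in>I'. y i * E m i x)
        (normal_density (\<Sum>i\<in>I'. 0) (sqrt (\<Sum>i\<in>I'. \<bar>y i\<bar>\<^sup>2)))"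
      using fI' indI' nI by (intro sum_indep_normal) (auto simp: I'_def)
    moreover have "(\<Sum>i\<in>I'. \<bar>y i\<bar>\<^sup>2) = (\<Sum>i<n. (y i)\<^sup>2)"
      unfolding power2_abs by (rule sum.mono_neutral_left) (auto simp: I'_def)
    moreover have "(\<lambda>x. \<Sum>i\<in>I'. y i * E m i x) = G m"
      unfolding G_def by (rule ext, rule sum.mono_neutral_left) (auto simp: I'_def)
    ultimately show ?thesis by (simp add: \<sigma>_def)
  qed
  have R1: "0 < real R + 1" by simp
  have sx: "(\<Sum>i<n. (c i + E m i \<omega>) * y i) = (\<Sum>i<n. c i * y i) + G m \<omega>" for c m \<omega>
    by (simp add: G_def sum.distrib[symmetric] algebra_simps)
  have pm: "p_mx n R y (\<lambda>i. c i + E 0 i \<omega>) (\<lambda>m i. w i + E m i \<omega>) \<le> \<alpha> \<longleftrightarrow>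
      1 + real (card {m\<in>{1..R}. \<bar>(\<Sum>i<n. c i * y i) + G 0 \<omega>\<bar> \<le> \<bar>cw + G m \<omega>\<bar>}) \<le> K" for c \<omega>
    unfolding p_mx_def K_def sx cw_def using R1 by (simp add: pos_divide_le_eq)
  define ev where "ev c = {\<omega>\<in>space M. p_mx n R y (\<lambda>i. c i + E 0 i \<omega>) (\<lambda>m i. w i + E m i \<omega>) \<le> \<alpha>}" for c
  have rvG: "random_variable borel (G m)" if "m \<le> R" for m
    using nG[OF that] by (auto dest: distributed_measurable)
  have valid: "prob (ev w) \<le> \<alpha>"
  proof -
    define H where "H j \<omega> = cw + G j \<omega>" for j \<omega>
    define N where "N = density lborel (\<lambda>x. ennreal (normal_density cw \<sigma> x))"
    define P where "P = PiM {0..R} (\<lambda>_. N)"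
    have sN: "sets N = sets borel" by (simp add: N_def)
    have pN: "prob_space N" unfolding N_def using \<sigma>0 by (rule prob_space_normal_density)
    have indH: "indep_vars (\<lambda>_. borel) H {0..R}"
      using indep_vars_compose2[OF indG, of "\<lambda>j x. cw + x" "\<lambda>_. borel"] by (simp add: H_def[abs_def])
    have rvH: "random_variable borel (H j)" if "j \<in> {0..R}" for j
    proof -
      have "random_variable borel (G j)" using rvG that by simp
      then show ?thesis unfolding H_def[abs_def] by measurable
    qed
    have dHj: "distr M borel (H j) = N" if "j \<in> {0..R}" for j
    proof -
      have "distributed M lborel (\<lambda>x. cw + 1 * G j x) (\<lambda>x. ennreal (normal_density (cw + 1 * 0) (\<bar>1\<bar> * \<sigma>) x))"
        using that by (intro normal_density_affine nG \<sigma>0) auto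
      then have "distributed M lborel (H j) (\<lambda>x. ennreal (normal_density cw \<sigma> x))"
        by (simp add: H_def[abs_def])
      then have "distr M lborel (H j) = N" unfolding N_def by (rule distributed_distr_eq_density)
      moreover have "distr M borel (H j) = distr M lborel (H j)" by (rule distr_cong) auto
      ultimately show ?thesis by simp
    qed
    have dH: "distr M (PiM {0..R} (\<lambda>_. borel)) (\<lambda>\<omega>. \<lambda>j\<in>{0..R}. H j \<omega>) = P"
      using indep_vars_iff_distr_eq_PiM'[of "{0..R}" H "\<lambda>_. borel"] indH rvH dHj
      unfolding P_def by (auto intro!: PiM_cong)
    define A where "A = {h\<in>space P. real (card {k\<in>{0..R}. \<bar>h 0\<bar> \<le> \<bar>h k\<bar>}) \<le> K}"
    have Am: "A \<in> sets P" unfolding A_def P_def by (rule card_set_meas[OF sN]) simp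
    have mH: "(\<lambda>\<omega>. \<lambda>j\<in>{0..R}. H j \<omega>) \<in> measurable M P"
      using rvH unfolding P_def
      by (intro measurable_restrict) (auto simp: measurable_cong_sets[OF refl sN])
    have "ev w = (\<lambda>\<omega>. \<lambda>j\<in>{0..R}. H j \<omega>) -` A \<inter> space M"
    proof -
      have "real (card {k\<in>{0..R}. \<bar>H 0 \<omega>\<bar> \<le> \<bar>H k \<omega>\<bar>}) = 1 + real (card {m\<in>{1..R}. \<bar>H 0 \<omega>\<bar> \<le> \<bar>H m \<omega>\<bar>})" for \<omega>
        by (subst sum_card_split) simp
      then show ?thesis
        using measurable_space[OF mH]
        by (auto simp: ev_def pm A_def H_def cw_def cong: conj_cong)
    qed
    then have "prob (ev w) = measure (distr M P (\<lambda>\<omega>. \<lambda>j\<in>{0..R}. H j \<omega>)) A"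
      using mH Am by (simp add: measure_distr)
    also have "distr M P (\<lambda>\<omega>. \<lambda>j\<in>{0..R}. H j \<omega>) = P"
      using dH by (subst distr_cong[OF refl, of _ "PiM {0..R} (\<lambda>_. borel)"]) (auto simp: P_def sN intro!: sets_PiM_cong)
    finally have "prob (ev w) = measure P A" .
    moreover have "measure P A * (real R + 1) \<le> K"
      unfolding A_def P_def by (rule exch[OF pN sN K0])
    ultimately show ?thesis using R1 by (simp add: K_def)
  qed
  \<comment> \<open>Step 2: shifting the mean of the observed statistic\<close>
  define Rv where "Rv \<omega> = (\<lambda>j\<in>{1..R}. G j \<omega>)" for \<omega>
  define Q where "Q = PiM {1..R} (\<lambda>_. borel::real measure)"
  define Q0 where "Q0 = PiM {0::nat} (\<lambda>_. borel::real measure)"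
  define emb where "emb s = (\<lambda>j\<in>{0::nat}. s::real)" for s
  define PR where "PR = distr M Q Rv"
  define Nd where "Nd c = density lborel (\<lambda>x. ennreal (normal_density c \<sigma> x))" for c
  define B where "B = {(r, f)\<in>space (Q \<Otimes>\<^sub>M Q0). 1 + real (card {m\<in>{1..R}. \<bar>f 0\<bar> \<le> \<bar>cw + r m\<bar>}) \<le> K}"
  have iv: "indep_var Q Rv Q0 (\<lambda>\<omega>. \<lambda>j\<in>{0}. G j \<omega>)"
    unfolding Q_def Q0_def Rv_def[abs_def] by (rule indep_var_restrict[OF indG]) auto
  have embm: "emb \<in> measurable borel Q0"
    unfolding emb_def[abs_def] Q0_def by (intro measurable_restrict) auto
  have Bm: "B \<in> sets (Q \<Otimes>\<^sub>M Q0)"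
  proof -
    have "B = {x\<in>space (Q \<Otimes>\<^sub>M Q0). 1 + (\<Sum>m\<in>{1..R}. if \<bar>snd x 0\<bar> \<le> \<bar>cw + fst x m\<bar> then 1 else 0::real) \<le> K}"
      unfolding B_def by (subst card_eq_sum_if) auto
    also have "\<dots> \<in> sets (Q \<Otimes>\<^sub>M Q0)"
    proof -
      have c: "(\<lambda>x. fst x m) \<in> borel_measurable (Q \<Otimes>\<^sub>M Q0)" if "m \<in> {1..R}" for m
        using that unfolding Q_def by (intro measurable_compose[OF measurable_fst] measurable_component_singleton) auto
      have c0: "(\<lambda>x. snd x 0) \<in> borel_measurable (Q \<Otimes>\<^sub>M Q0)"
        unfolding Q0_def by (intro measurable_compose[OF measurable_snd] measurable_component_singleton) auto
      have "(\<lambda>x. 1 + (\<Sum>m\<in>{1..R}. if \<bar>snd x 0\<bar> \<le> \<bar>cw + fst x m\<bar> then 1 else 0::real)) \<in> borel_measurable (Q \<Otimes>\<^sub>M Q0)"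
        using c c0
        by (intro borel_measurable_add borel_measurable_const borel_measurable_sum measurable_If borel_measurable_le borel_measurable_abs) auto
      from borel_measurable_le[OF this borel_measurable_const[of K]] show ?thesis .
    qed
    finally show ?thesis .
  qed
  have sNd: "sets (Nd c) = sets borel" for c by (simp add: Nd_def)
  have embm': "emb \<in> measurable (Nd c) Q0" for c
    by (subst measurable_cong_sets[OF sNd refl]) (rule embm)
  have shiftc: "emeasure M {\<omega>\<in>space M. (Rv \<omega>, emb (c + G 0 \<omega>)) \<in> B}
      = (\<integral>\<^sup>+r. emeasure (Nd c) (emb -` (Pair r -` B)) \<partial>PR)" for c
  proof -
    have ivc: "indep_var Q Rv Q0 (\<lambda>\<omega>. emb (c + G 0 \<omega>))"
    proof -
      have m2: "(\<lambda>f. emb (c + f 0)) \<in> measurable Q0 Q0"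
        unfolding Q0_def by (intro measurable_compose[OF _ embm[unfolded Q0_def]]) measurable
      show ?thesis
        using indep_var_compose[unfolded comp_def, OF iv measurable_ident m2] by simp
    qed
    have dc: "distr M borel (\<lambda>\<omega>. c + G 0 \<omega>) = Nd c"
    proof -
      have "distributed M lborel (\<lambda>x. c + 1 * G 0 x) (\<lambda>x. ennreal (normal_density (c + 1 * 0) (\<bar>1\<bar> * \<sigma>) x))"
        by (intro normal_density_affine nG \<sigma>0) auto
      then have "distr M lborel (\<lambda>x. c + G 0 x) = Nd c" unfolding Nd_def
        by (intro distributed_distr_eq_density) simp
      moreover have "distr M borel (\<lambda>x. c + G 0 x) = distr M lborel (\<lambda>x. c + G 0 x)" by (rule distr_cong) auto
      ultimately show ?thesis by simp
    qed
    have rv0: "random_variable borel (\<lambda>\<omega>. c + G 0 \<omega>)"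
      using rvG[of 0] by measurable
    have dY: "distr M Q0 (\<lambda>\<omega>. emb (c + G 0 \<omega>)) = distr (Nd c) Q0 emb"
    proof -
      have "distr (distr M borel (\<lambda>\<omega>. c + G 0 \<omega>)) Q0 emb = distr M Q0 (emb \<circ> (\<lambda>\<omega>. c + G 0 \<omega>))"
        by (rule distr_distr[OF embm rv0])
      then show ?thesis unfolding dc by (simp add: comp_def)
    qed
    have J: "distr M (Q \<Otimes>\<^sub>M Q0) (\<lambda>\<omega>. (Rv \<omega>, emb (c + G 0 \<omega>))) = PR \<Otimes>\<^sub>M distr (Nd c) Q0 emb"
      using ivc unfolding indep_var_distribution_eq PR_def dY by simp
    have mJ: "(\<lambda>\<omega>. (Rv \<omega>, emb (c + G 0 \<omega>))) \<in> measurable M (Q \<Otimes>\<^sub>M Q0)"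
      using ivc unfolding indep_var_distribution_eq by (auto intro: measurable_Pair)
    have "emeasure M {\<omega>\<in>space M. (Rv \<omega>, emb (c + G 0 \<omega>)) \<in> B} = emeasure (PR \<Otimes>\<^sub>M distr (Nd c) Q0 emb) B"
    proof -
      have "{\<omega>\<in>space M. (Rv \<omega>, emb (c + G 0 \<omega>)) \<in> B} = (\<lambda>\<omega>. (Rv \<omega>, emb (c + G 0 \<omega>))) -` B \<inter> space M"
        by blast
      then show ?thesis unfolding J[symmetric] by (simp only: emeasure_distr[OF mJ Bm])
    qed
    also have "\<dots> = (\<integral>\<^sup>+r. emeasure (distr (Nd c) Q0 emb) (Pair r -` B) \<partial>PR)"
    proof (rule sigma_finite_measure.emeasure_pair_measure_alt)
      have "prob_space (distr (Nd c) Q0 emb)"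
        using prob_space_normal_density[OF \<sigma>0] embm' unfolding Nd_def by (intro prob_space.prob_space_distr) auto
      then show "sigma_finite_measure (distr (Nd c) Q0 emb)"
        by (rule prob_space_imp_sigma_finite)
      show "B \<in> sets (PR \<Otimes>\<^sub>M distr (Nd c) Q0 emb)" using Bm
        by (subst sets_pair_measure_cong[of PR Q "distr (Nd c) Q0 emb" Q0]) (auto simp: PR_def)
    qed
    also have "\<dots> = (\<integral>\<^sup>+r. emeasure (Nd c) (emb -` (Pair r -` B)) \<partial>PR)"
    proof (rule nn_integral_cong)
      fix r assume r: "r \<in> space PR"
      have "Pair r -` B \<in> sets Q0" using Bm by (rule sets_Pair1)
      moreover note embm'[of c]
      ultimately show "emeasure (distr (Nd c) Q0 emb) (Pair r -` B) = emeasure (Nd c) (emb -` (Pair r -` B))"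
        by (subst emeasure_distr) (auto simp: Nd_def)
    qed
    finally show ?thesis .
  qed
  have prPR: "prob_space PR"
    unfolding PR_def using iv by (intro prob_space_distr) (auto dest: indep_var_rv1)
  have sfD: "sigma_finite_measure (distr (Nd c) Q0 emb)" for c
  proof -
    have "prob_space (distr (Nd c) Q0 emb)"
      using prob_space_normal_density[OF \<sigma>0] embm' unfolding Nd_def by (intro prob_space.prob_space_distr) auto
    then show ?thesis by (rule prob_space_imp_sigma_finite)
  qed
  have BmD: "B \<in> sets (PR \<Otimes>\<^sub>M distr (Nd c) Q0 emb)" for c
    using Bm by (subst sets_pair_measure_cong[of PR Q "distr (Nd c) Q0 emb" Q0]) (auto simp: PR_def)
  have eqs: "emeasure (distr (Nd c) Q0 emb) (Pair r -` B) = emeasure (Nd c) (emb -` (Pair r -` B))" for c r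
  proof -
    have "Pair r -` B \<in> sets Q0" using Bm by (rule sets_Pair1)
    then show ?thesis using embm'[of c] by (subst emeasure_distr) (auto simp: Nd_def)
  qed
  have msr: "(\<lambda>r. emeasure (Nd c) (emb -` (Pair r -` B))) \<in> borel_measurable PR" for c
    using sigma_finite_measure.measurable_emeasure_Pair[OF sfD BmD, of c] by (simp add: eqs)
  have Sb: "emb -` (Pair r -` B) \<in> sets borel" for r
  proof -
    have "Pair r -` B \<in> sets Q0" using Bm by (rule sets_Pair1)
    from measurable_sets[OF embm this] show ?thesis by simp
  qed
  define d where "d = \<bar>cu - cw\<bar> * normal_density 0 \<sigma> 0"
  have d0: "0 \<le> d" by (simp add: d_def)
  have evc: "ev c = {\<omega>\<in>space M. (Rv \<omega>, emb ((\<Sum>i<n. c i * y i) + G 0 \<omega>)) \<in> B}" for c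
    unfolding ev_def pm B_def
    by (auto simp: space_pair_measure Q_def Q0_def emb_def Rv_def space_PiM cong: conj_cong)
  have "emeasure M (ev u) = (\<integral>\<^sup>+r. emeasure (Nd cu) (emb -` (Pair r -` B)) \<partial>PR)"
    unfolding evc shiftc cu_def ..
  also have "\<dots> \<le> (\<integral>\<^sup>+r. emeasure (Nd cw) (emb -` (Pair r -` B)) + ennreal d \<partial>PR)"
    by (intro nn_integral_mono) (simp add: Nd_def d_def L1D[OF Sb \<sigma>0])
  also have "\<dots> = (\<integral>\<^sup>+r. emeasure (Nd cw) (emb -` (Pair r -` B)) \<partial>PR) + ennreal d"
    using prPR msr by (subst nn_integral_add) (auto simp: prob_space.emeasure_space_1)
  also have "(\<integral>\<^sup>+r. emeasure (Nd cw) (emb -` (Pair r -` B)) \<partial>PR) = emeasure M (ev w)"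
    unfolding evc shiftc cw_def ..
  finally have "emeasure M (ev u) \<le> emeasure M (ev w) + ennreal d" .
  then have shift: "prob (ev u) \<le> prob (ev w) + d"
    using d0 by (simp add: emeasure_eq_measure ennreal_plus[symmetric] del: ennreal_plus)
  have dle: "d \<le> 2 / sqrt (2 * pi) * sqrt (\<Sum>i<n. (u i - w i)\<^sup>2)"
  proof -
    define a where "a = sqrt (\<Sum>i<n. (u i - w i)\<^sup>2)"
    have a0: "0 \<le> a" by (simp add: a_def sum_nonneg)
    have "cu - cw = (\<Sum>i<n. (u i - w i) * y i)"
      by (simp add: cu_def cw_def sum_subtractf[symmetric] left_diff_distrib)
    then have "(cu - cw)\<^sup>2 \<le> (\<Sum>i<n. (u i - w i)\<^sup>2) * (\<Sum>i<n. (y i)\<^sup>2)"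
      by (simp add: Cauchy_Schwarz_ineq_sum)
    then have "sqrt ((cu - cw)\<^sup>2) \<le> sqrt ((\<Sum>i<n. (u i - w i)\<^sup>2) * (\<Sum>i<n. (y i)\<^sup>2))"
      by (rule real_sqrt_le_mono)
    then have cs: "\<bar>cu - cw\<bar> \<le> a * \<sigma>" by (simp add: a_def \<sigma>_def real_sqrt_mult)
    have nd: "normal_density 0 \<sigma> 0 = 1 / (sqrt (2 * pi) * \<sigma>)"
      using \<sigma>0 by (simp add: normal_density_def real_sqrt_mult)
    have pos: "0 \<le> 1 / (sqrt (2 * pi) * \<sigma>)" using \<sigma>0 by simp
    have "d \<le> a * \<sigma> * (1 / (sqrt (2 * pi) * \<sigma>))"
      unfolding d_def nd using cs pos by (rule mult_right_mono)
    also have "\<dots> = a / sqrt (2 * pi)" using \<sigma>0 by simp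
    also have "\<dots> \<le> 2 / sqrt (2 * pi) * a" using a0 by (simp add: divide_right_mono)
    finally show ?thesis by (simp add: a_def)
  qed
  show ?thesis using shift valid dle by (simp add: ev_def)
qed

end

lemma p_mx_cong:
  assumes "\<And>i. i < n \<Longrightarrow> y i = y' i" "\<And>i. i < n \<Longrightarrow> x i = x' i"
    "\<And>m i. 1 \<le> m \<Longrightarrow> m \<le> M \<Longrightarrow> i < n \<Longrightarrow> xt m i = xt' m i"
  shows "p_mx n M y x xt = p_mx n M y' x' xt'"
proof -
  have s1: "(\<Sum>i<n. x i * y i) = (\<Sum>i<n. x' i * y' i)" using assms by (intro sum.cong) auto
  have s2: "m \<in> {1..M} \<Longrightarrow> (\<Sum>i<n. xt m i * y i) = (\<Sum>i<n. xt' m i * y' i)" for m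
    using assms by (intro sum.cong) auto
  have "{m \<in> {1..M}. \<bar>\<Sum>i<n. xt m i * y i\<bar> \<ge> \<bar>\<Sum>i<n. x i * y i\<bar>} = {m \<in> {1..M}. \<bar>\<Sum>i<n. xt' m i * y' i\<bar> \<ge> \<bar>\<Sum>i<n. x' i * y' i\<bar>}"
    using s1 s2 by auto
  then show ?thesis unfolding p_mx_def by simp
qed

theorem mainTheorem5:
  fixes \<Omega> :: "'w measure"
    and n M :: nat and \<alpha> :: real
    and Z :: "nat \<Rightarrow> 'w \<Rightarrow> real ^ 'p"
    and eta eps :: "nat \<Rightarrow> 'w \<Rightarrow> real"
    and xi :: "nat \<Rightarrow> nat \<Rightarrow> 'w \<Rightarrow> real"
    and mu_y mu_x mu_mx :: "real ^ 'p \<Rightarrow> real"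
    and PZ :: "(real ^ 'p) measure" and Peta :: "real measure"
  assumes "prob_space \<Omega>"
    and "M \<ge> 1" and "0 < \<alpha>" and "\<alpha> < 1"
    and "mu_y \<in> borel_measurable borel" and "mu_x \<in> borel_measurable borel"
    and "mu_mx \<in> borel_measurable borel"
    and "\<And>i. i < n \<Longrightarrow> Z i \<in> borel_measurable \<Omega>"
    and "\<And>i. i < n \<Longrightarrow> eta i \<in> borel_measurable \<Omega>"
    and "\<And>i. i < n \<Longrightarrow> distr \<Omega> borel (Z i) = PZ"
    and "\<And>i. i < n \<Longrightarrow> distr \<Omega> borel (eta i) = Peta"
    and "\<And>i. i < n \<Longrightarrow> integrable \<Omega> (eta i) \<and> integral\<^sup>L \<Omega> (eta i) = 0"
    and "\<And>i. i < n \<Longrightarrow> distributed \<Omega> lborel (eps i) (\<lambda>t. ennreal (std_normal_density t))"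
    and "\<And>m i. 1 \<le> m \<Longrightarrow> m \<le> M \<Longrightarrow> i < n \<Longrightarrow>
           distributed \<Omega> lborel (xi m i) (\<lambda>t. ennreal (std_normal_density t))"
    and "crt_indep \<Omega> n M Z eta eps xi"
    and "AE \<omega> in \<Omega>. (\<exists>i<n. mu_y (Z i \<omega>) + eta i \<omega> \<noteq> 0)"
    and "integrable PZ (\<lambda>z. (mu_x z - mu_mx z)\<^sup>2)"
  shows "measure \<Omega> {\<omega> \<in> space \<Omega>.
            p_mx n M (\<lambda>i. mu_y (Z i \<omega>) + eta i \<omega>) (\<lambda>i. mu_x (Z i \<omega>) + eps i \<omega>)
                 (\<lambda>m i. mu_mx (Z i \<omega>) + xi m i \<omega>) \<le> \<alpha>}
         \<le> \<alpha> + 2 / sqrt (2 * pi) * sqrt (real n * (\<integral>z. (mu_x z - mu_mx z)\<^sup>2 \<partial>PZ))"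
  proof -
  interpret prob_space \<Omega> by fact
  define U where "U = (\<lambda>j \<omega>. case j of IZ i \<Rightarrow> (Z i \<omega>, 0::real) | IEta i \<Rightarrow> (0::real^'p, eta i \<omega>)
     | IEps i \<Rightarrow> (0, eps i \<omega>) | IXi m i \<Rightarrow> (0, xi m i \<omega>))"
  define I where "I = crt_index_set n M"
  have epsm: "eps i \<in> borel_measurable \<Omega>" if "i < n" for i
    using distributed_measurable[OF assms(13)[OF that]] by simp
  have xim: "xi m i \<in> borel_measurable \<Omega>" if "1 \<le> m" "m \<le> M" "i < n" for m i
    using distributed_measurable[OF assms(14)[OF that]] by simp
  have rvU: "U j \<in> borel_measurable \<Omega>" if "j \<in> I" for j
  proof -
    have pm: "(\<lambda>\<omega>. (f \<omega>, g \<omega>)) \<in> borel_measurable \<Omega>" if "f \<in> borel_measurable \<Omega>" "g \<in> borel_measurable \<Omega>"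
      for f :: "'w \<Rightarrow> real^'p" and g :: "'w \<Rightarrow> real"
      by (subst borel_prod[symmetric]) (rule measurable_Pair[OF that])
    show ?thesis using that
      by (cases j) (auto simp: U_def I_def crt_index_set_def intro!: pm epsm xim assms(8) assms(9))
  qed
  have indU: "indep_vars (\<lambda>_. borel) U I"
    unfolding indep_vars_def2
  proof safe
    fix j assume "j \<in> I" then show "random_variable borel (U j)" by (rule rvU)
  next
    have v1: "(\<lambda>z. (z, c)) -` A \<in> sets borel" if "A \<in> sets (borel :: ((real^'p) \<times> real) measure)" for A c
    proof -
      have "(\<lambda>z::real^'p. (z, c)) \<in> borel_measurable borel"
        by (subst borel_prod[symmetric]) (auto intro!: measurable_Pair)
      from measurable_sets[OF this that] show ?thesis by simp
    qed
    have v2: "(\<lambda>z. (c, z)) -` A \<in> sets borel" if "A \<in> sets (borel :: ((real^'p) \<times> real) measure)" for A c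
    proof -
      have "(\<lambda>z::real. (c, z)) \<in> borel_measurable borel"
        by (subst borel_prod[symmetric]) (auto intro!: measurable_Pair)
      from measurable_sets[OF this that] show ?thesis by simp
    qed
    show "indep_sets (\<lambda>j. {U j -` A \<inter> space \<Omega> |A. A \<in> sets borel}) I"
    proof (rule indep_sets_mono_sets)
      show "indep_sets (\<lambda>j. case j of
          IZ i \<Rightarrow> {Z i -` A \<inter> space \<Omega> | A. A \<in> sets borel}
        | IEta i \<Rightarrow> {eta i -` A \<inter> space \<Omega> | A. A \<in> sets borel}
        | IEps i \<Rightarrow> {eps i -` A \<inter> space \<Omega> | A. A \<in> sets borel}
        | IXi m i \<Rightarrow> {xi m i -` A \<inter> space \<Omega> | A. A \<in> sets borel}) I"
        using assms(15) unfolding crt_indep_def I_def .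
      fix j assume "j \<in> I"
      show "{U j -` A \<inter> space \<Omega> |A. A \<in> sets borel} \<subseteq> (case j of
          IZ i \<Rightarrow> {Z i -` A \<inter> space \<Omega> | A. A \<in> sets borel}
        | IEta i \<Rightarrow> {eta i -` A \<inter> space \<Omega> | A. A \<in> sets borel}
        | IEps i \<Rightarrow> {eps i -` A \<inter> space \<Omega> | A. A \<in> sets borel}
        | IXi m i \<Rightarrow> {xi m i -` A \<inter> space \<Omega> | A. A \<in> sets borel})"
      proof (cases j)
        case (IZ i)
        have "U j -` A \<inter> space \<Omega> \<in> {Z i -` B \<inter> space \<Omega> | B. B \<in> sets borel}" if "A \<in> sets borel" for A
          using v1[OF that, of 0] unfolding IZ U_def by (intro CollectI exI[of _ "(\<lambda>z. (z, 0)) -` A"]) auto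
        then show ?thesis using IZ by auto
      next
        case (IEta i)
        have "U j -` A \<inter> space \<Omega> \<in> {eta i -` B \<inter> space \<Omega> | B. B \<in> sets borel}" if "A \<in> sets borel" for A
          using v2[OF that, of 0] unfolding IEta U_def by (intro CollectI exI[of _ "(\<lambda>z. (0, z)) -` A"]) auto
        then show ?thesis using IEta by auto
      next
        case (IEps i)
        have "U j -` A \<inter> space \<Omega> \<in> {eps i -` B \<inter> space \<Omega> | B. B \<in> sets borel}" if "A \<in> sets borel" for A
          using v2[OF that, of 0] unfolding IEps U_def by (intro CollectI exI[of _ "(\<lambda>z. (0, z)) -` A"]) auto
        then show ?thesis using IEps by auto
      next
        case (IXi m i)
        have "U j -` A \<inter> space \<Omega> \<in> {xi m i -` B \<inter> space \<Omega> | B. B \<in> sets borel}" if "A \<in> sets borel" for A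
          using v2[OF that, of 0] unfolding IXi U_def by (intro CollectI exI[of _ "(\<lambda>z. (0, z)) -` A"]) auto
        then show ?thesis using IXi by auto
      qed
    qed
  qed
  define KZ where "KZ = {IZ i | i. i < n} \<union> {IEta i | i. i < n}"
  define KX where "KX = {IEps i | i. i < n} \<union> {IXi m i | m i. 1 \<le> m \<and> m \<le> M \<and> i < n}"
  define QZ where "QZ = PiM KZ (\<lambda>_. borel :: ((real^'p) \<times> real) measure)"
  define QX where "QX = PiM KX (\<lambda>_. borel :: ((real^'p) \<times> real) measure)"
  define ZE where "ZE \<omega> = (\<lambda>j\<in>KZ. U j \<omega>)" for \<omega>
  define Xv where "Xv \<omega> = (\<lambda>j\<in>KX. U j \<omega>)" for \<omega>
  have ivZX: "indep_var QZ ZE QX Xv"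
    unfolding QZ_def QX_def ZE_def[abs_def] Xv_def[abs_def]
    by (rule indep_var_restrict[OF indU]) (auto simp: KZ_def KX_def I_def crt_index_set_def)
  define za where "za a i = fst (a (IZ i))" for a :: "crt_idx \<Rightarrow> (real^'p) \<times> real" and i
  define ya where "ya a i = mu_y (za a i) + snd (a (IEta i))" for a i
  define \<Phi> where "\<Phi> a b = p_mx n M (ya a) (\<lambda>i. mu_x (za a i) + snd (b (IEps i))) (\<lambda>m i. mu_mx (za a i) + snd (b (IXi m i)))" for a b :: "crt_idx \<Rightarrow> (real^'p) \<times> real"
  define F where "F = {x\<in>space (QZ \<Otimes>\<^sub>M QX). \<Phi> (fst x) (snd x) \<le> \<alpha>}"
  have Fm: "F \<in> sets (QZ \<Otimes>\<^sub>M QX)"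
  proof -
    define fp where "fp i x = mu_x (za (fst x) i) + snd (snd x (IEps i))" for i and x :: "(crt_idx \<Rightarrow> (real^'p) \<times> real) \<times> (crt_idx \<Rightarrow> (real^'p) \<times> real)"
    define fx where "fx m i x = mu_mx (za (fst x) i) + snd (snd x (IXi m i))" for m i and x :: "(crt_idx \<Rightarrow> (real^'p) \<times> real) \<times> (crt_idx \<Rightarrow> (real^'p) \<times> real)"
    define fy where "fy i x = ya (fst x) i" for i and x :: "(crt_idx \<Rightarrow> (real^'p) \<times> real) \<times> (crt_idx \<Rightarrow> (real^'p) \<times> real)"
    note [measurable] = assms(5,6,7)
    have "F = {x\<in>space (QZ \<Otimes>\<^sub>M QX). (1 + (\<Sum>m\<in>{1..M}. if \<bar>\<Sum>i<n. fp i x * fy i x\<bar>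
          \<le> \<bar>\<Sum>i<n. fx m i x * fy i x\<bar> then 1 else 0)) / (real M + 1) \<le> \<alpha>}"
      unfolding F_def \<Phi>_def p_mx_def fp_def fx_def fy_def by (subst card_eq_sum_if) auto
    also have "\<dots> \<in> sets (QZ \<Otimes>\<^sub>M QX)"
    proof -
      have fstb: "fst \<in> borel_measurable (borel :: ((real^'p) \<times> real) measure)"
        by (subst borel_prod[symmetric]) (rule measurable_fst)
      have sndb: "snd \<in> borel_measurable (borel :: ((real^'p) \<times> real) measure)"
        by (subst borel_prod[symmetric]) (rule measurable_snd)
      have cZ: "(\<lambda>x. fst x j) \<in> measurable (QZ \<Otimes>\<^sub>M QX) borel" if "j \<in> KZ" for j
        using that unfolding QZ_def by (intro measurable_compose[OF measurable_fst] measurable_component_singleton) auto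
      have cX: "(\<lambda>x. snd x j) \<in> measurable (QZ \<Otimes>\<^sub>M QX) borel" if "j \<in> KX" for j
        using that unfolding QX_def by (intro measurable_compose[OF measurable_snd] measurable_component_singleton) auto
      have gz: "(\<lambda>x. za (fst x) i) \<in> borel_measurable (QZ \<Otimes>\<^sub>M QX)" if "i < n" for i
        unfolding za_def using measurable_compose[OF cZ fstb, of "IZ i"] that by (simp add: KZ_def)
      have gy: "fy i \<in> borel_measurable (QZ \<Otimes>\<^sub>M QX)" if "i < n" for i
        unfolding fy_def[abs_def] ya_def using measurable_compose[OF gz[OF that] assms(5)] measurable_compose[OF cZ sndb, of "IEta i"] that
        by (intro borel_measurable_add) (auto simp: KZ_def)
      have gp: "fp i \<in> borel_measurable (QZ \<Otimes>\<^sub>M QX)" if "i < n" for i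
        unfolding fp_def[abs_def] using measurable_compose[OF gz[OF that] assms(6)] measurable_compose[OF cX sndb, of "IEps i"] that
        by (intro borel_measurable_add) (auto simp: KX_def)
      have gx: "fx m i \<in> borel_measurable (QZ \<Otimes>\<^sub>M QX)"
        if "i < n" "m \<in> {1..M}" for i m
        unfolding fx_def[abs_def] using measurable_compose[OF gz[OF that(1)] assms(7)] measurable_compose[OF cX sndb, of "IXi m i"] that
        by (intro borel_measurable_add) (auto simp: KX_def)
      have "(\<lambda>x. (1 + (\<Sum>m\<in>{1..M}. if \<bar>\<Sum>i<n. fp i x * fy i x\<bar>
          \<le> \<bar>\<Sum>i<n. fx m i x * fy i x\<bar> then 1 else 0)) / (real M + 1))
          \<in> borel_measurable (QZ \<Otimes>\<^sub>M QX)"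
        using gy gp gx
        by (intro borel_measurable_divide borel_measurable_add borel_measurable_const borel_measurable_sum
            measurable_If borel_measurable_le borel_measurable_abs borel_measurable_times) auto
      from borel_measurable_le[OF this borel_measurable_const[of \<alpha>]] show ?thesis .
    qed
    finally show ?thesis .
  qed
  have fstb: "fst \<in> borel_measurable (borel :: ((real^'p) \<times> real) measure)"
    by (subst borel_prod[symmetric]) (rule measurable_fst)
  have sndb: "snd \<in> borel_measurable (borel :: ((real^'p) \<times> real) measure)"
    by (subst borel_prod[symmetric]) (rule measurable_snd)
  define PZE where "PZE = distr \<Omega> QZ ZE"
  define PX where "PX = distr \<Omega> QX Xv"
  have rvZ: "ZE \<in> measurable \<Omega> QZ" and rvX: "Xv \<in> measurable \<Omega> QX"
    using ivZX by (auto dest: indep_var_rv1 indep_var_rv2)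
  have pPX: "prob_space PX" unfolding PX_def using rvX by (rule prob_space_distr)
  have pPZE: "prob_space PZE" unfolding PZE_def using rvZ by (rule prob_space_distr)
  define evt where "evt = {\<omega> \<in> space \<Omega>.
            p_mx n M (\<lambda>i. mu_y (Z i \<omega>) + eta i \<omega>) (\<lambda>i. mu_x (Z i \<omega>) + eps i \<omega>)
                 (\<lambda>m i. mu_mx (Z i \<omega>) + xi m i \<omega>) \<le> \<alpha>}"
  have zaZE: "za (ZE \<omega>) i = Z i \<omega>" "ya (ZE \<omega>) i = mu_y (Z i \<omega>) + eta i \<omega>" if "i < n" for i \<omega>
    using that by (auto simp: za_def ya_def ZE_def KZ_def U_def)
  have XvE: "snd (Xv \<omega> (IEps i)) = eps i \<omega>" if "i < n" for i \<omega>
    using that by (auto simp: Xv_def KX_def U_def)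
  have XvX: "snd (Xv \<omega> (IXi m i)) = xi m i \<omega>" if "1 \<le> m" "m \<le> M" "i < n" for m i \<omega>
    using that by (auto simp: Xv_def KX_def U_def)
  have evt_eq: "evt = (\<lambda>\<omega>. (ZE \<omega>, Xv \<omega>)) -` F \<inter> space \<Omega>"
  proof -
    have "\<Phi> (ZE \<omega>) (Xv \<omega>) = p_mx n M (\<lambda>i. mu_y (Z i \<omega>) + eta i \<omega>) (\<lambda>i. mu_x (Z i \<omega>) + eps i \<omega>)
                 (\<lambda>m i. mu_mx (Z i \<omega>) + xi m i \<omega>)" for \<omega>
      unfolding \<Phi>_def by (rule p_mx_cong) (simp_all add: zaZE XvE XvX)
    moreover have "(ZE \<omega>, Xv \<omega>) \<in> space (QZ \<Otimes>\<^sub>M QX)" if "\<omega> \<in> space \<Omega>" for \<omega>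
      using measurable_space[OF rvZ that] measurable_space[OF rvX that] by (simp add: space_pair_measure)
    ultimately show ?thesis unfolding evt_def F_def by auto
  qed
  have sF: "F \<in> sets (PZE \<Otimes>\<^sub>M PX)"
    using Fm by (subst sets_pair_measure_cong[of PZE QZ PX QX]) (auto simp: PZE_def PX_def)
  have "emeasure \<Omega> evt = emeasure (PZE \<Otimes>\<^sub>M PX) F"
  proof -
    have J: "distr \<Omega> (QZ \<Otimes>\<^sub>M QX) (\<lambda>\<omega>. (ZE \<omega>, Xv \<omega>)) = PZE \<Otimes>\<^sub>M PX"
      using ivZX unfolding indep_var_distribution_eq PZE_def PX_def by simp
    have mJ: "(\<lambda>\<omega>. (ZE \<omega>, Xv \<omega>)) \<in> measurable \<Omega> (QZ \<Otimes>\<^sub>M QX)"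
      using rvZ rvX by (rule measurable_Pair)
    show ?thesis unfolding evt_eq J[symmetric] by (simp only: emeasure_distr[OF mJ Fm])
  qed
  also have "\<dots> = (\<integral>\<^sup>+a. emeasure PX (Pair a -` F) \<partial>PZE)"
    using pPX sF by (intro sigma_finite_measure.emeasure_pair_measure_alt prob_space_imp_sigma_finite)
  finally have fub: "emeasure \<Omega> evt = (\<integral>\<^sup>+a. emeasure PX (Pair a -` F) \<partial>PZE)" .
  define E where "E m i \<omega> = (if m = 0 then eps i \<omega> else xi m i \<omega>)" for m i \<omega>
  define idx where "idx p = (if fst p = 0 then IEps (snd p) else IXi (fst p) (snd p))" for p :: "nat \<times> nat"
  have indE: "indep_vars (\<lambda>_. borel) (\<lambda>p. E (fst p) (snd p)) ({0..M} \<times> {..<n})"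
  proof -
    have "indep_vars (\<lambda>_. borel) (\<lambda>p \<omega>. (\<lambda>f. snd (f (idx p))) (\<lambda>j\<in>{idx p}. U j \<omega>)) ({0..M} \<times> {..<n})"
    proof (rule indep_blocks[OF indU])
      show "disjoint_family_on (\<lambda>p. {idx p}) ({0..M} \<times> {..<n})"
        by (auto simp: disjoint_family_on_def idx_def split: if_splits)
      fix p assume "p \<in> {0..M} \<times> {..<n}"
      then show "{idx p} \<subseteq> I" by (auto simp: idx_def I_def crt_index_set_def)
      show "(\<lambda>f. snd (f (idx p)) :: real) \<in> borel_measurable (Pi\<^sub>M {idx p} (\<lambda>_. borel :: ((real^'p) \<times> real) measure))"
        by (rule measurable_compose[where g=snd, OF _ sndb], rule measurable_component_singleton, simp)
    qed
    then show ?thesis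
      by (rule indep_vars_cong[THEN iffD1, rotated 3]) (auto simp: fun_eq_iff E_def idx_def U_def)
  qed
  have nrmE: "distributed \<Omega> lborel (E m i) (\<lambda>t. ennreal (std_normal_density t))" if "m \<le> M" "i < n" for m i
  proof (cases "m = 0")
    case True
    then have "E m i = eps i" by (simp add: E_def fun_eq_iff)
    then show ?thesis using assms(13)[OF \<open>i < n\<close>] by simp
  next
    case False
    then have "E m i = xi m i" by (simp add: E_def fun_eq_iff)
    then show ?thesis using assms(14)[of m i] False that by simp
  qed
  define c where "c = 2 / sqrt (2 * pi)"
  define S where "S a = (\<Sum>i<n. (mu_x (za a i) - mu_mx (za a i))\<^sup>2)" for a
  have inner_a: "emeasure PX (Pair a -` F) \<le> ennreal (\<alpha> + c * sqrt (S a))"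
    if a: "a \<in> space QZ" and ya0: "\<exists>i<n. ya a i \<noteq> 0" for a
  proof -
    have sl: "Pair a -` F \<in> sets QX" using Fm by (rule sets_Pair1)
    have seq: "Xv -` (Pair a -` F) \<inter> space \<Omega> = {\<omega>\<in>space \<Omega>. p_mx n M (ya a) (\<lambda>i. mu_x (za a i) + E 0 i \<omega>) (\<lambda>m i. mu_mx (za a i) + E m i \<omega>) \<le> \<alpha>}"
    proof -
      have "\<Phi> a (Xv \<omega>) = p_mx n M (ya a) (\<lambda>i. mu_x (za a i) + E 0 i \<omega>) (\<lambda>m i. mu_mx (za a i) + E m i \<omega>)" for \<omega>
        unfolding \<Phi>_def by (rule p_mx_cong) (simp_all add: XvE XvX E_def)
      moreover have "(a, Xv \<omega>) \<in> space (QZ \<Otimes>\<^sub>M QX)" if "\<omega> \<in> space \<Omega>" for \<omega>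
        using a measurable_space[OF rvX that] by (simp add: space_pair_measure)
      ultimately show ?thesis unfolding F_def by auto
    qed
    have "emeasure PX (Pair a -` F) = emeasure \<Omega> (Xv -` (Pair a -` F) \<inter> space \<Omega>)"
      unfolding PX_def using rvX sl by (rule emeasure_distr)
    also have "\<dots> = emeasure \<Omega> {\<omega>\<in>space \<Omega>. p_mx n M (ya a) (\<lambda>i. mu_x (za a i) + E 0 i \<omega>) (\<lambda>m i. mu_mx (za a i) + E m i \<omega>) \<le> \<alpha>}"
      by (simp only: seq)
    also have "\<dots> = ennreal (prob {\<omega>\<in>space \<Omega>. p_mx n M (ya a) (\<lambda>i. mu_x (za a i) + E 0 i \<omega>) (\<lambda>m i. mu_mx (za a i) + E m i \<omega>) \<le> \<alpha>})"
      by (rule emeasure_eq_measure)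
    also have "\<dots> \<le> ennreal (\<alpha> + c * sqrt (S a))"
      unfolding c_def S_def
      by (intro ennreal_leI inner[OF indE nrmE ya0 assms(3)]) auto
    finally show ?thesis .
  qed
  have cza: "(\<lambda>a. za a i) \<in> borel_measurable QZ" if "i < n" for i
    unfolding za_def[abs_def] QZ_def
    by (rule measurable_compose[where g=fst, OF _ fstb], rule measurable_component_singleton) (use that in \<open>auto simp: KZ_def\<close>)
  have mya: "(\<lambda>a. ya a i) \<in> borel_measurable QZ" if "i < n" for i
  proof -
    have "(\<lambda>a. snd (a (IEta i))) \<in> borel_measurable QZ"
      unfolding QZ_def
      by (rule measurable_compose[where g=snd, OF _ sndb], rule measurable_component_singleton) (use that in \<open>auto simp: KZ_def\<close>)
    then show ?thesis unfolding ya_def[abs_def]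
      using measurable_compose[OF cza[OF that] assms(5)] by (intro borel_measurable_add) auto
  qed
  have AEya: "AE a in PZE. \<exists>i<n. ya a i \<noteq> 0"
  proof -
    have setm: "{a\<in>space QZ. \<exists>i\<in>{..<n}. ya a i \<noteq> 0} \<in> sets QZ"
    proof (rule sets.sets_Collect_finite_Ex)
      fix i assume "i \<in> {..<n}"
      then have m: "(\<lambda>a. ya a i) \<in> borel_measurable QZ" by (intro mya) auto
      have "-{0::real} \<in> sets borel" by (intro borel_open) auto
      from measurable_sets[OF m this] show "{a\<in>space QZ. ya a i \<noteq> 0} \<in> sets QZ"
        by (simp add: vimage_def Int_def conj_commute)
    qed auto
    have "AE \<omega> in \<Omega>. \<exists>i\<in>{..<n}. ya (ZE \<omega>) i \<noteq> 0"
      using assms(16) by eventually_elim (auto simp: zaZE)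
    then have "AE a in PZE. \<exists>i\<in>{..<n}. ya a i \<noteq> 0" unfolding PZE_def using AE_distr_iff[OF rvZ setm] by simp
    then show ?thesis by eventually_elim auto
  qed
  have bnd: "(\<integral>\<^sup>+a. emeasure PX (Pair a -` F) \<partial>PZE) \<le> (\<integral>\<^sup>+a. ennreal (\<alpha> + c * sqrt (S a)) \<partial>PZE)"
  proof (rule nn_integral_mono_AE)
    show "AE a in PZE. emeasure PX (Pair a -` F) \<le> ennreal (\<alpha> + c * sqrt (S a))"
      using AEya AE_space[of PZE]
    proof eventually_elim
      case (elim a)
      then show ?case by (intro inner_a) (auto simp: PZE_def)
    qed
  qed
  define g where "g z = (mu_x z - mu_mx z)\<^sup>2" for z
  define T where "T \<omega> = (\<Sum>i<n. g (Z i \<omega>))" for \<omega>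
  define V where "V = (\<integral>z. g z \<partial>PZ)"
  have gm: "g \<in> borel_measurable borel" unfolding g_def[abs_def] using assms(6,7) by measurable
  have mS: "S \<in> borel_measurable QZ"
    unfolding S_def[abs_def] using cza
    by (intro borel_measurable_sum borel_measurable_power borel_measurable_diff
        measurable_compose[OF _ assms(6)] measurable_compose[OF _ assms(7)]) auto
  have SZ: "S (ZE \<omega>) = T \<omega>" for \<omega>
    unfolding S_def T_def g_def by (intro sum.cong) (auto simp: zaZE)
  have Zm: "Z i \<in> measurable \<Omega> borel" if "i < n" for i using assms(8) that by simp
  have intg: "integrable \<Omega> (\<lambda>\<omega>. g (Z i \<omega>))" if "i < n" for i
    using integrable_distr_eq[OF Zm[OF that] gm] assms(10)[OF that] assms(17) by (simp add: g_def[abs_def])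
  have intT: "integrable \<Omega> T" unfolding T_def[abs_def] using intg by (intro Bochner_Integration.integrable_sum) auto
  have T0: "0 \<le> T \<omega>" for \<omega> unfolding T_def g_def by (intro sum_nonneg) auto
  have Tm: "T \<in> borel_measurable \<Omega>" using intT by (rule borel_measurable_integrable)
  have intT_val: "(\<integral>\<omega>. T \<omega> \<partial>\<Omega>) = real n * V"
  proof -
    have "(\<integral>\<omega>. T \<omega> \<partial>\<Omega>) = (\<Sum>i<n. \<integral>\<omega>. g (Z i \<omega>) \<partial>\<Omega>)"
      unfolding T_def using intg by (intro Bochner_Integration.integral_sum) auto
    also have "\<dots> = (\<Sum>i<n. V)"
    proof (intro sum.cong refl)
      fix i assume "i \<in> {..<n}"
      then have "i < n" by simp
      show "(\<integral>\<omega>. g (Z i \<omega>) \<partial>\<Omega>) = V"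
        using integral_distr[OF Zm[OF \<open>i < n\<close>] gm] assms(10)[OF \<open>i < n\<close>] by (simp add: V_def)
    qed
    finally show ?thesis by simp
  qed
  have V0: "0 \<le> real n * V" unfolding intT_val[symmetric] using T0 by (intro integral_nonneg_AE) auto
  have sqrtm: "(\<lambda>\<omega>. sqrt (T \<omega>)) \<in> borel_measurable \<Omega>" using Tm by measurable
  have sq_le: "sqrt x \<le> (x / t + t) / 2" if "0 \<le> x" "0 < t" for x t :: real
  proof -
    have "0 \<le> (sqrt x - t)\<^sup>2" by simp
    then have "2 * t * sqrt x \<le> x + t\<^sup>2" using that by (simp add: power2_eq_square algebra_simps)
    then show ?thesis using that by (simp add: field_simps power2_eq_square)
  qed
  have intsq: "integrable \<Omega> (\<lambda>\<omega>. sqrt (T \<omega>))"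
  proof (rule Bochner_Integration.integrable_bound[OF _ sqrtm])
    show "integrable \<Omega> (\<lambda>\<omega>. (T \<omega> / 1 + 1) / 2)" using intT by auto
    show "AE \<omega> in \<Omega>. norm (sqrt (T \<omega>)) \<le> norm ((T \<omega> / 1 + 1) / 2)"
      using sq_le[OF T0 zero_less_one] T0 by auto
  qed
  have jensen: "(\<integral>\<omega>. sqrt (T \<omega>) \<partial>\<Omega>) \<le> sqrt (real n * V)"
  proof -
    have tb: "(\<integral>\<omega>. sqrt (T \<omega>) \<partial>\<Omega>) \<le> (real n * V / t + t) / 2" if t: "0 < t" for t
    proof -
      have "(\<integral>\<omega>. sqrt (T \<omega>) \<partial>\<Omega>) \<le> (\<integral>\<omega>. (T \<omega> / t + t) / 2 \<partial>\<Omega>)"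
        using intsq intT sq_le[OF T0 t] by (intro integral_mono) auto
      also have "\<dots> = (real n * V / t + t) / 2"
        using intT by (simp add: intT_val prob_space)
      finally show ?thesis .
    qed
    show ?thesis
    proof (cases "real n * V = 0")
      case True
      have "(\<integral>\<omega>. sqrt (T \<omega>) \<partial>\<Omega>) \<le> 0"
      proof (rule ccontr)
        assume "\<not> ?thesis"
        then have p: "0 < (\<integral>\<omega>. sqrt (T \<omega>) \<partial>\<Omega>)" by simp
        from tb[OF p] True p show False by simp
      qed
      then show ?thesis unfolding True by simp
    next
      case False
      then have "0 < real n * V" using V0 by linarith
      then have p: "0 < sqrt (real n * V)" by simp
      have "(real n * V / sqrt (real n * V) + sqrt (real n * V)) / 2 = sqrt (real n * V)"
        using V0 p by (simp add: real_div_sqrt)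
      then show ?thesis using tb[OF p] by simp
    qed
  qed
  have "(\<integral>\<^sup>+a. ennreal (\<alpha> + c * sqrt (S a)) \<partial>PZE) = (\<integral>\<^sup>+\<omega>. ennreal (\<alpha> + c * sqrt (T \<omega>)) \<partial>\<Omega>)"
  proof -
    have "(\<lambda>a. ennreal (\<alpha> + c * sqrt (S a))) \<in> borel_measurable PZE"
      using mS unfolding PZE_def by measurable
    then show ?thesis unfolding PZE_def by (simp add: nn_integral_distr[OF rvZ] SZ)
  qed
  also have "\<dots> = ennreal (\<integral>\<omega>. \<alpha> + c * sqrt (T \<omega>) \<partial>\<Omega>)"
  proof (rule nn_integral_eq_integral)
    show "integrable \<Omega> (\<lambda>\<omega>. \<alpha> + c * sqrt (T \<omega>))" using intsq by auto
    have "0 \<le> c" by (simp add: c_def)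
    then show "AE \<omega> in \<Omega>. 0 \<le> \<alpha> + c * sqrt (T \<omega>)"
      using assms(3) T0 by (intro AE_I2 add_nonneg_nonneg mult_nonneg_nonneg) auto
  qed
  also have "(\<integral>\<omega>. \<alpha> + c * sqrt (T \<omega>) \<partial>\<Omega>) = \<alpha> + c * (\<integral>\<omega>. sqrt (T \<omega>) \<partial>\<Omega>)"
    using intsq by (simp add: prob_space)
  finally have "emeasure \<Omega> evt \<le> ennreal (\<alpha> + c * (\<integral>\<omega>. sqrt (T \<omega>) \<partial>\<Omega>))"
    using fub bnd by simp
  then have "measure \<Omega> evt \<le> \<alpha> + c * (\<integral>\<omega>. sqrt (T \<omega>) \<partial>\<Omega>)"
  proof -
    have "0 \<le> (\<integral>\<omega>. sqrt (T \<omega>) \<partial>\<Omega>)" using T0 by (intro integral_nonneg_AE) auto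
    moreover have "0 \<le> c" by (simp add: c_def)
    ultimately have rhs0: "0 \<le> \<alpha> + c * (\<integral>\<omega>. sqrt (T \<omega>) \<partial>\<Omega>)" using assms(3) by simp
    show ?thesis using \<open>emeasure \<Omega> evt \<le> _\<close> rhs0 by (simp add: emeasure_eq_measure ennreal_le_iff)
  qed
  also have "\<dots> \<le> \<alpha> + c * sqrt (real n * V)"
  proof -
    have "0 \<le> c" by (simp add: c_def)
    then show ?thesis using jensen by (simp add: mult_left_mono)
  qed
  finally show ?thesis unfolding evt_def c_def V_def g_def .
qed

end
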